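(* Let $G$ be a finite triangle-free graph of order $n$. (i) If $\delta(G)\geq 1$, then $\beta_{s}(G)\leq n+6-2\sqrt{9+2n}$. (ii) If $\delta(G)\geq 2$, then $\beta_{D}(G)\leq n+4-2\sqrt{4+2n}$. Furthermore, the inequality in (i) holds with equality if and only if $G\in\Lambda$, and the inequality in (ii) holds with equality if and only if $G\in\Omega$.
   Context: All graphs are finite and simple. For a vertex $v$, $N(v)$ is its open neighborhood and $N[v]=N(v)\cup\{v\}$; $\delta(G)$ and $\Delta(G)$ denote minimum and maximum degree, and $G[S]$ is the subgraph induced by $S$. For $f:V(G)\to\mathbb{R}$ and $S\subseteq V(G)$, $f(S)=\sum_{v\in S}f(v)$. A signed bad function (SBF) of $G$ is a function $f:V(G)\to\{-1,1\}$ with $f(N[v])\leq 1$ for every $v\in V(G)$; the signed bad number is $\beta_s(G)=\max\{f(V(G)) : f \text{ is an SBF of } G\}$. A bad function (BF) of $G$ is a function $f:V(G)\to\{-1,1\}$ with $f(N(v))\leq 1$ for every $v\in V(G)$; the negative decision number is $\beta_D(G)=\max\{f(V(G)) : f \text{ is a BF of } G\}$. The corona $G_1\circ G_2$ is the graph formed from one copy of $G_1$ and $|V(G_1)|$ copies of $G_2$, where the $i$th vertex of $G_1$ is joined to every vertex of the $i$th copy of $G_2$. $\overline{K_m}$ denotes the edgeless graph on $m$ vertices. $\Lambda$ is the family of all graphs $G$ obtained, for some positive integer $p$, from $K_{p,p}\circ\overline{K_{p+2}}$ by adding some new edges (possibly none) whose endpoints both lie in the copies of $\overline{K_{p+2}}$,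 such that the resulting graph is triangle-free and $\Delta(G[V(G)\setminus V(K_{p,p})])\leq 1$. $\Omega$ is the family of all graphs $G$ obtained, for some positive integer $p$, from $K_{p,p}\circ\overline{K_{p+1}}$ by adding some new edges (possibly none) whose endpoints both lie in the copies of $\overline{K_{p+1}}$, such that the resulting graph is triangle-free and $\Delta(G[V(G)\setminus V(K_{p,p})])\leq 2$. *)

theory Defs
  imports Complex_Main
begin

definition simple_graph :: "'a set \<Rightarrow> ('a \<Rightarrow> 'a \<Rightarrow> bool) \<Rightarrow> bool" where
  "simple_graph V E \<longleftrightarrow> finite V \<and> (\<forall>x y. E x y \<longrightarrow> x \<in> V \<and> y \<in> V)
     \<and> (\<forall>x y. E x y \<longrightarrow> E y x) \<and> (\<forall>x. \<not> E x x)"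

definition nbhd :: "'a set \<Rightarrow> ('a \<Rightarrow> 'a \<Rightarrow> bool) \<Rightarrow> 'a \<Rightarrow> 'a set" where
  "nbhd V E v = {u \<in> V. E v u}"

definition cnbhd :: "'a set \<Rightarrow> ('a \<Rightarrow> 'a \<Rightarrow> bool) \<Rightarrow> 'a \<Rightarrow> 'a set" where
  "cnbhd V E v = insert v (nbhd V E v)"

definition triangle_free :: "'a set \<Rightarrow> ('a \<Rightarrow> 'a \<Rightarrow> bool) \<Rightarrow> bool" where
  "triangle_free V E \<longleftrightarrow> \<not> (\<exists>x\<in>V. \<exists>y\<in>V. \<exists>z\<in>V. E x y \<and> E y z \<and> E x z)"

definition min_deg_ge :: "'a set \<Rightarrow> ('a \<Rightarrow> 'a \<Rightarrow> bool) \<Rightarrow> nat \<Rightarrow> bool" where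
  "min_deg_ge V E k \<longleftrightarrow> (\<forall>v\<in>V. card (nbhd V E v) \<ge> k)"

definition is_SBF :: "'a set \<Rightarrow> ('a \<Rightarrow> 'a \<Rightarrow> bool) \<Rightarrow> ('a \<Rightarrow> int) \<Rightarrow> bool" where
  "is_SBF V E f \<longleftrightarrow> (\<forall>v\<in>V. f v \<in> {-1, 1}) \<and> (\<forall>v\<in>V. sum f (cnbhd V E v) \<le> 1)"

definition is_BF :: "'a set \<Rightarrow> ('a \<Rightarrow> 'a \<Rightarrow> bool) \<Rightarrow> ('a \<Rightarrow> int) \<Rightarrow> bool" where
  "is_BF V E f \<longleftrightarrow> (\<forall>v\<in>V. f v \<in> {-1, 1}) \<and> (\<forall>v\<in>V. sum f (nbhd V E v) \<le> 1)"

definition signed_bad_number :: "'a set \<Rightarrow> ('a \<Rightarrow> 'a \<Rightarrow> bool) \<Rightarrow> int" where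
  "signed_bad_number V E = Max {sum f V | f. is_SBF V E f}"

definition negative_decision_number :: "'a set \<Rightarrow> ('a \<Rightarrow> 'a \<Rightarrow> bool) \<Rightarrow> int" where
  "negative_decision_number V E = Max {sum f V | f. is_BF V E f}"

text \<open>Graphs obtained (up to isomorphism) from the corona K_{p,p} o (empty graph on q
  vertices) by adding edges among the corona leaves, such that the result is
  triangle-free and the leaves induce a subgraph of maximum degree at most d.
  A, B are the two sides of K_{p,p}; L is the set of leaves and h assigns each leaf
  to the vertex of K_{p,p} it is attached to.\<close>
definition corona_family :: "nat \<Rightarrow> nat \<Rightarrow> 'a set \<Rightarrow> ('a \<Rightarrow> 'a \<Rightarrow> bool) \<Rightarrow> bool" where
  "corona_family qoff d V E \<longleftrightarrow>
     (\<exists>p::nat. \<exists>A B L. \<exists>h :: 'a \<Rightarrow> 'a. p \<ge> 1 \<and>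
        V = A \<union> B \<union> L \<and> A \<inter> B = {} \<and> A \<inter> L = {} \<and> B \<inter> L = {} \<and>
        card A = p \<and> card B = p \<and>
        (\<forall>l\<in>L. h l \<in> A \<union> B) \<and>
        (\<forall>x\<in>A \<union> B. card {l \<in> L. h l = x} = p + qoff) \<and>
        (\<forall>u\<in>A \<union> B. \<forall>v\<in>A \<union> B. E u v \<longleftrightarrow> (u \<in> A \<and> v \<in> B) \<or> (u \<in> B \<and> v \<in> A)) \<and>
        (\<forall>l\<in>L. \<forall>x\<in>A \<union> B. E l x \<longleftrightarrow> h l = x) \<and>
        triangle_free V E \<and>
        (\<forall>l\<in>L. card (nbhd L E l) \<le> d))"

text \<open>The family Lambda: q = p+2 leaves per vertex, leaf subgraph of max degree \<le> 1.\<close>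
definition in_Lambda :: "'a set \<Rightarrow> ('a \<Rightarrow> 'a \<Rightarrow> bool) \<Rightarrow> bool" where
  "in_Lambda V E \<longleftrightarrow> corona_family 2 1 V E"

text \<open>The family Omega: q = p+1 leaves per vertex, leaf subgraph of max degree \<le> 2.\<close>
definition in_Omega :: "'a set \<Rightarrow> ('a \<Rightarrow> 'a \<Rightarrow> bool) \<Rightarrow> bool" where
  "in_Omega V E \<longleftrightarrow> corona_family 1 2 V E"

end

theory Submission
  imports Defs
begin

lemma sum_pm:
  fixes f :: "'a \<Rightarrow> int"
  assumes "finite S" "\<forall>v\<in>S. f v \<in> {-1,1}"
  shows "sum f S = int (card {v\<in>S. f v = 1}) - int (card {v\<in>S. f v = -1})"
proof -
  have S: "S = {v\<in>S. f v = 1} \<union> {v\<in>S. f v = -1}" using assms(2) by auto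
  have "sum f S = sum f {v\<in>S. f v = 1} + sum f {v\<in>S. f v = -1}"
    by (subst S, rule sum.union_disjoint) (use assms(1) in auto)
  also have "sum f {v\<in>S. f v = 1} = sum (\<lambda>_. 1) {v\<in>S. f v = 1}"
    by (rule sum.cong) auto
  also have "sum f {v\<in>S. f v = -1} = sum (\<lambda>_. -1) {v\<in>S. f v = -1}"
    by (rule sum.cong) auto
  finally show ?thesis by simp
qed

lemma dcount:
  assumes "finite P" "finite M" "\<forall>x y. E x y \<longrightarrow> E y x"
  shows "(\<Sum>v\<in>P. card (nbhd M E v)) = (\<Sum>u\<in>M. card (nbhd P E u))"
proof -
  have "(\<Sum>v\<in>P. card (nbhd M E v)) = (\<Sum>v\<in>P. \<Sum>u\<in>{u. u \<in> M \<and> E v u}. (1::nat))"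
    by (simp add: nbhd_def)
  also have "\<dots> = (\<Sum>u\<in>M. \<Sum>v\<in>{v. v \<in> P \<and> E v u}. (1::nat))"
    by (rule sum.swap_restrict) (use assms in auto)
  also have "\<dots> = (\<Sum>u\<in>M. card (nbhd P E u))"
  proof (rule sum.cong)
    fix u assume "u \<in> M"
    have "{v. v \<in> P \<and> E v u} = nbhd P E u" using assms(3) by (auto simp: nbhd_def)
    then show "(\<Sum>v\<in>{v. v \<in> P \<and> E v u}. (1::nat)) = card (nbhd P E u)" by simp
  qed simp
  finally show ?thesis .
qed

lemma mantel:
  assumes fin: "finite M" and sym: "\<forall>x y. E x y \<longrightarrow> E y x"
    and tf: "\<forall>x\<in>M. \<forall>y\<in>M. \<forall>z\<in>M. \<not> (E x y \<and> E y z \<and> E x z)"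
  shows "2 * (\<Sum>v\<in>M. card (nbhd M E v)) \<le> card M ^ 2"
    and "2 * (\<Sum>v\<in>M. card (nbhd M E v)) = card M ^ 2 \<Longrightarrow> \<forall>v\<in>M. 2 * card (nbhd M E v) = card M"
proof -
  define d where "d v = int (card (nbhd M E v))" for v
  define m where "m = int (card M)"
  define S where "S = (\<Sum>v\<in>M. d v)"
  have S_eq: "S = int (\<Sum>v\<in>M. card (nbhd M E v))" by (simp add: S_def d_def)
  have finN: "finite (nbhd M E v)" for v using fin by (simp add: nbhd_def)
  have edge: "d v + d u \<le> m" if "v \<in> M" "u \<in> nbhd M E v" for u v
  proof -
    have disj: "nbhd M E v \<inter> nbhd M E u = {}"
      using tf that by (auto simp: nbhd_def)
    have "card (nbhd M E v \<union> nbhd M E u) \<le> card M"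
      by (rule card_mono[OF fin]) (auto simp: nbhd_def)
    then show ?thesis using card_Un_disjoint[OF finN finN disj]
      by (simp add: d_def m_def)
  qed
  have sq1: "(\<Sum>v\<in>M. \<Sum>u\<in>nbhd M E v. d v) = (\<Sum>v\<in>M. d v * d v)"
    by (simp add: d_def)
  have "(\<Sum>v\<in>M. \<Sum>u\<in>nbhd M E v. d u) = (\<Sum>v\<in>M. \<Sum>u\<in>{u. u \<in> M \<and> E v u}. d u)"
    by (simp add: nbhd_def)
  also have "\<dots> = (\<Sum>u\<in>M. \<Sum>v\<in>{v. v \<in> M \<and> E v u}. d u)"
    by (rule sum.swap_restrict) (use fin in auto)
  also have "\<dots> = (\<Sum>u\<in>M. d u * d u)"
  proof (rule sum.cong)
    fix u assume "u \<in> M"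
    have "{v. v \<in> M \<and> E v u} = nbhd M E u" using sym by (auto simp: nbhd_def)
    then show "(\<Sum>v\<in>{v. v \<in> M \<and> E v u}. d u) = d u * d u" by (simp add: d_def)
  qed simp
  finally have sq2: "(\<Sum>v\<in>M. \<Sum>u\<in>nbhd M E v. d u) = (\<Sum>v\<in>M. d v * d v)" .
  have "2 * (\<Sum>v\<in>M. d v * d v) = (\<Sum>v\<in>M. \<Sum>u\<in>nbhd M E v. d v + d u)"
    using sq1 sq2 by (simp add: sum.distrib)
  also have "\<dots> \<le> (\<Sum>v\<in>M. \<Sum>u\<in>nbhd M E v. m)"
    by (intro sum_mono) (use edge in auto)
  also have "\<dots> = m * S" by (simp add: S_def d_def sum_distrib_left mult.commute)
  finally have key: "2 * (\<Sum>v\<in>M. d v * d v) \<le> m * S" .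
  have expand: "(\<Sum>v\<in>M. (2 * d v - m)^2) = 4 * (\<Sum>v\<in>M. d v * d v) - 4 * m * S + m * m * m"
    by (simp add: power2_eq_square algebra_simps sum.distrib sum_subtractf sum_distrib_left sum_distrib_right S_def m_def)
  have nn: "0 \<le> (\<Sum>v\<in>M. (2 * d v - m)^2)" by (intro sum_nonneg) auto
  have main: "(\<Sum>v\<in>M. (2 * d v - m)^2) \<le> m * (m * m - 2 * S)"
    using expand key by (simp add: algebra_simps)
  have m0: "m \<ge> 0" by (simp add: m_def)
  have "2 * S \<le> m * m"
  proof (cases "m = 0")
    case True
    then have "M = {}" using fin by (simp add: m_def)
    then show ?thesis by (simp add: S_def)
  next
    case False
    then have "m > 0" using m0 by simp
    with nn main have "0 \<le> m * (m * m - 2 * S)" by linarith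
    with \<open>m > 0\<close> show ?thesis by (simp add: zero_le_mult_iff)
  qed
  moreover have i1: "int (2 * (\<Sum>v\<in>M. card (nbhd M E v))) = 2 * S" using S_eq by simp
  moreover have i2: "int (card M ^ 2) = m * m" by (simp add: m_def power2_eq_square)
  ultimately show "2 * (\<Sum>v\<in>M. card (nbhd M E v)) \<le> card M ^ 2"
    by (metis of_nat_le_iff)
  assume eq: "2 * (\<Sum>v\<in>M. card (nbhd M E v)) = card M ^ 2"
  then have "int (2 * (\<Sum>v\<in>M. card (nbhd M E v))) = int (card M ^ 2)" by (rule arg_cong)
  then have "2 * S = m * m" unfolding i1 i2 .
  then have "(\<Sum>v\<in>M. (2 * d v - m)^2) = 0" using nn main by simp
  then have z: "\<forall>v\<in>M. (2 * d v - m)^2 = 0"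
    using sum_nonneg_eq_0_iff[OF fin, of "\<lambda>v. (2 * d v - m)^2"] by simp
  show "\<forall>v\<in>M. 2 * card (nbhd M E v) = card M"
  proof
    fix v assume "v \<in> M"
    with z have "2 * d v = m" by simp
    then have "int (2 * card (nbhd M E v)) = int (card M)" by (simp add: d_def m_def)
    then show "2 * card (nbhd M E v) = card M" by (rule of_nat_eq_iff[THEN iffD1])
  qed
qed

lemma core:
  assumes sg: "simple_graph V E" and tf: "triangle_free V E" and V: "V = P \<union> M"
    and disj: "P \<inter> M = {}"
    and hP: "\<forall>v\<in>P. 1 \<le> card (nbhd M E v)"
    and hM: "\<forall>v\<in>M. card (nbhd P E v) \<le> card (nbhd M E v) + c"
  shows "2 * card P \<le> card M ^ 2 + 2 * c * card M"
    and "2 * card P = card M ^ 2 + 2 * c * card M \<Longrightarrow> V \<noteq> {} \<Longrightarrow>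
       (\<forall>v\<in>P. card (nbhd M E v) = 1) \<and> (\<forall>v\<in>M. card (nbhd P E v) = card (nbhd M E v) + c)
       \<and> (\<forall>v\<in>M. 2 * card (nbhd M E v) = card M) \<and> M \<noteq> {}"
proof -
  have finV: "finite V" and sym: "\<forall>x y. E x y \<longrightarrow> E y x" using sg by (auto simp: simple_graph_def)
  have finP: "finite P" and finM: "finite M" using finV V by auto
  have tfM: "\<forall>x\<in>M. \<forall>y\<in>M. \<forall>z\<in>M. \<not> (E x y \<and> E y z \<and> E x z)"
    using tf V by (auto simp: triangle_free_def)
  have s1: "card P \<le> (\<Sum>v\<in>P. card (nbhd M E v))"
    using sum_mono[of P "\<lambda>_. 1::nat" "\<lambda>v. card (nbhd M E v)"] hP by simp
  have s2: "(\<Sum>v\<in>P. card (nbhd M E v)) = (\<Sum>u\<in>M. card (nbhd P E u))"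
    by (rule dcount[OF finP finM sym])
  have s3: "(\<Sum>u\<in>M. card (nbhd P E u)) \<le> (\<Sum>u\<in>M. card (nbhd M E u) + c)"
    by (rule sum_mono) (use hM in auto)
  have s3': "(\<Sum>u\<in>M. card (nbhd M E u) + c) = (\<Sum>u\<in>M. card (nbhd M E u)) + c * card M"
    by (simp add: sum.distrib)
  have s4: "2 * (\<Sum>u\<in>M. card (nbhd M E u)) \<le> card M ^ 2"
    by (rule mantel(1)[OF finM sym tfM])
  show "2 * card P \<le> card M ^ 2 + 2 * c * card M"
    using s1 s2 s3 s3' s4 by linarith
  assume eq: "2 * card P = card M ^ 2 + 2 * c * card M" and ne: "V \<noteq> {}"
  have e1: "card P = (\<Sum>v\<in>P. card (nbhd M E v))"
    using eq s1 s2 s3 s3' s4 by linarith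
  have e2: "(\<Sum>u\<in>M. card (nbhd P E u)) = (\<Sum>u\<in>M. card (nbhd M E u) + c)"
    using eq s1 s2 s3 s3' s4 by linarith
  have e4: "2 * (\<Sum>u\<in>M. card (nbhd M E u)) = card M ^ 2"
    using eq s1 s2 s3 s3' s4 by linarith
  have r1: "\<forall>v\<in>P. card (nbhd M E v) = 1"
  proof (rule ccontr)
    assume "\<not> ?thesis"
    then have "\<exists>v\<in>P. (\<lambda>_. 1::nat) v < card (nbhd M E v)" using hP by force
    then have "(\<Sum>v\<in>P. (1::nat)) < (\<Sum>v\<in>P. card (nbhd M E v))"
      by (intro sum_strict_mono_ex1[OF finP]) (use hP in auto)
    then show False using e1 by simp
  qed
  have r2: "\<forall>v\<in>M. card (nbhd P E v) = card (nbhd M E v) + c"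
  proof (rule ccontr)
    assume "\<not> ?thesis"
    then have "\<exists>v\<in>M. card (nbhd P E v) < card (nbhd M E v) + c" using hM by force
    then have "(\<Sum>u\<in>M. card (nbhd P E u)) < (\<Sum>u\<in>M. card (nbhd M E u) + c)"
      by (intro sum_strict_mono_ex1[OF finM]) (use hM in auto)
    then show False using e2 by simp
  qed
  have r3: "\<forall>v\<in>M. 2 * card (nbhd M E v) = card M"
    by (rule mantel(2)[OF finM sym tfM e4])
  have "M \<noteq> {}"
  proof
    assume "M = {}"
    then have "card P = 0" using eq by simp
    then have "P = {}" using finP by simp
    then show False using ne V \<open>M = {}\<close> by simp
  qed
  then show "(\<forall>v\<in>P. card (nbhd M E v) = 1) \<and> (\<forall>v\<in>M. card (nbhd P E v) = card (nbhd M E v) + c)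
       \<and> (\<forall>v\<in>M. 2 * card (nbhd M E v) = card M) \<and> M \<noteq> {}"
    using r1 r2 r3 by blast
qed

lemma bip:
  assumes fin: "finite M" and sym: "\<forall>x y. E x y \<longrightarrow> E y x"
    and tf: "\<forall>x\<in>M. \<forall>y\<in>M. \<forall>z\<in>M. \<not> (E x y \<and> E y z \<and> E x z)"
    and ne: "M \<noteq> {}" and reg: "\<forall>v\<in>M. 2 * card (nbhd M E v) = card M"
  shows "\<exists>A B. M = A \<union> B \<and> A \<inter> B = {} \<and> 2 * card A = card M \<and> 2 * card B = card M
     \<and> (\<forall>x\<in>M. \<forall>y\<in>M. E x y \<longleftrightarrow> (x \<in> A \<and> y \<in> B) \<or> (x \<in> B \<and> y \<in> A))"
proof -
  obtain v0 where v0: "v0 \<in> M" using ne by blast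
  have "card M > 0" using fin ne by (simp add: card_gt_0_iff)
  then have "card (nbhd M E v0) > 0" using reg v0 by (metis gr0I mult_0_right)
  then obtain u0 where u0: "u0 \<in> nbhd M E v0" by (metis card_gt_0_iff ex_in_conv)
  then have u0M: "u0 \<in> M" and Evu: "E v0 u0" by (auto simp: nbhd_def)
  define A where "A = nbhd M E u0"
  define B where "B = nbhd M E v0"
  have finN: "finite (nbhd M E v)" for v using fin by (simp add: nbhd_def)
  have AB: "A \<inter> B = {}"
  proof (rule ccontr)
    assume "A \<inter> B \<noteq> {}"
    then obtain x where "x \<in> M" "E u0 x" "E v0 x" by (auto simp: A_def B_def nbhd_def)
    then show False using tf v0 u0M Evu by blast
  qed
  have cA: "2 * card A = card M" using reg u0M by (simp add: A_def)
  have cB: "2 * card B = card M" using reg v0 by (simp add: B_def)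
  have sub: "A \<union> B \<subseteq> M" by (auto simp: A_def B_def nbhd_def)
  have "card (A \<union> B) = card M"
    using card_Un_disjoint[OF finN finN AB[unfolded A_def B_def]] cA cB
    by (simp add: A_def B_def)
  then have MAB: "M = A \<union> B" using card_subset_eq[OF fin sub] by simp
  have noA: "\<not> E x y" if "x \<in> A" "y \<in> A" for x y
  proof
    assume "E x y"
    moreover have "x \<in> M" "y \<in> M" "E u0 x" "E u0 y" using that by (auto simp: A_def nbhd_def)
    ultimately show False using tf u0M by blast
  qed
  have noB: "\<not> E x y" if "x \<in> B" "y \<in> B" for x y
  proof
    assume "E x y"
    moreover have "x \<in> M" "y \<in> M" "E v0 x" "E v0 y" using that by (auto simp: B_def nbhd_def)
    ultimately show False using tf v0 by blast
  qed
  have fullA: "E x y" if "x \<in> A" "y \<in> B" for x y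
  proof -
    have xM: "x \<in> M" using that sub by auto
    have "nbhd M E x \<subseteq> B"
    proof
      fix w assume "w \<in> nbhd M E x"
      then have "w \<in> M" "E x w" by (auto simp: nbhd_def)
      then show "w \<in> B" using noA[OF that(1)] MAB by blast
    qed
    moreover have "card (nbhd M E x) = card B"
    proof -
      have "2 * card (nbhd M E x) = card M" using reg xM by blast
      then show ?thesis using cB by linarith
    qed
    ultimately have "nbhd M E x = B" using card_subset_eq[OF finN[of v0, folded B_def]] by blast
    then show ?thesis using that by (auto simp: nbhd_def)
  qed
  have fullB: "E x y" if "x \<in> B" "y \<in> A" for x y
    using fullA[OF that(2) that(1)] sym by blast
  have bp: "\<forall>x\<in>M. \<forall>y\<in>M. E x y \<longleftrightarrow> (x \<in> A \<and> y \<in> B) \<or> (x \<in> B \<and> y \<in> A)"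
    using MAB noA noB fullA fullB by blast
  show ?thesis using MAB AB cA cB bp by blast
qed

lemma f_split:
  fixes f :: "'a \<Rightarrow> int"
  assumes sg: "simple_graph V E" and pm: "\<forall>v\<in>V. f v \<in> {-1,1}"
  defines "P \<equiv> {v\<in>V. f v = 1}" and "M \<equiv> {v\<in>V. f v = -1}"
  shows "V = P \<union> M" "P \<inter> M = {}"
    "sum f V = int (card P) - int (card M)"
    "\<And>v. v \<in> V \<Longrightarrow> sum f (nbhd V E v) = int (card (nbhd P E v)) - int (card (nbhd M E v))"
    "\<And>v. v \<in> V \<Longrightarrow> sum f (cnbhd V E v) = f v + sum f (nbhd V E v)"
    "\<And>v. v \<in> V \<Longrightarrow> card (nbhd V E v) = card (nbhd P E v) + card (nbhd M E v)"
proof -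
  have finV: "finite V" and irr: "\<forall>x. \<not> E x x" using sg by (auto simp: simple_graph_def)
  show "V = P \<union> M" using pm by (auto simp: P_def M_def)
  show "P \<inter> M = {}" by (auto simp: P_def M_def)
  show "sum f V = int (card P) - int (card M)"
    unfolding P_def M_def by (rule sum_pm[OF finV pm])
  fix v assume v: "v \<in> V"
  have finN: "finite (nbhd V E v)" using finV by (simp add: nbhd_def)
  have e1: "{u \<in> nbhd V E v. f u = 1} = nbhd P E v" by (auto simp: P_def nbhd_def)
  have e2: "{u \<in> nbhd V E v. f u = -1} = nbhd M E v" by (auto simp: M_def nbhd_def)
  show "sum f (nbhd V E v) = int (card (nbhd P E v)) - int (card (nbhd M E v))"
    using sum_pm[OF finN] pm e1 e2 by (auto simp: nbhd_def)
  show "sum f (cnbhd V E v) = f v + sum f (nbhd V E v)"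
    unfolding cnbhd_def using finN irr by (simp add: nbhd_def)
  have "nbhd V E v = nbhd P E v \<union> nbhd M E v" using pm by (auto simp: P_def M_def nbhd_def)
  moreover have "nbhd P E v \<inter> nbhd M E v = {}" by (auto simp: P_def M_def nbhd_def)
  moreover have "finite (nbhd P E v)" "finite (nbhd M E v)" using finV
    by (auto simp: P_def M_def nbhd_def)
  ultimately show "card (nbhd V E v) = card (nbhd P E v) + card (nbhd M E v)"
    by (simp add: card_Un_disjoint)
qed

lemma arith1:
  fixes P m :: nat
  assumes "2 * P \<le> m ^ 2 + 4 * m"
  shows "real P - real m \<le> real (P + m) + 6 - 2 * sqrt (9 + 2 * real (P + m))"
    and "real P - real m = real (P + m) + 6 - 2 * sqrt (9 + 2 * real (P + m)) \<Longrightarrow> 2 * P = m ^ 2 + 4 * m"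
proof -
  have "real (2 * P) \<le> real (m ^ 2 + 4 * m)" using assms by (rule of_nat_mono)
  then have h: "9 + 2 * real (P + m) \<le> (real m + 3) ^ 2" by (simp add: power2_eq_square algebra_simps)
  have "sqrt (9 + 2 * real (P + m)) \<le> sqrt ((real m + 3) ^ 2)" using h by (rule real_sqrt_le_mono)
  also have "\<dots> = real m + 3" by simp
  finally show "real P - real m \<le> real (P + m) + 6 - 2 * sqrt (9 + 2 * real (P + m))" by simp
  assume "real P - real m = real (P + m) + 6 - 2 * sqrt (9 + 2 * real (P + m))"
  then have "sqrt (9 + 2 * real (P + m)) = real m + 3" by simp
  then have "(sqrt (9 + 2 * real (P + m)))^2 = (real m + 3)^2" by simp
  then have "9 + 2 * real (P + m) = (real m + 3)^2" by simp
  then have "real (2 * P) = real (m ^ 2 + 4 * m)" by (simp add: power2_eq_square algebra_simps)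
  then show "2 * P = m ^ 2 + 4 * m" by (rule of_nat_eq_iff[THEN iffD1])
qed

lemma arith2:
  fixes P m :: nat
  assumes "2 * P \<le> m ^ 2 + 2 * m"
  shows "real P - real m \<le> real (P + m) + 4 - 2 * sqrt (4 + 2 * real (P + m))"
    and "real P - real m = real (P + m) + 4 - 2 * sqrt (4 + 2 * real (P + m)) \<Longrightarrow> 2 * P = m ^ 2 + 2 * m"
proof -
  have "real (2 * P) \<le> real (m ^ 2 + 2 * m)" using assms by (rule of_nat_mono)
  then have h: "4 + 2 * real (P + m) \<le> (real m + 2) ^ 2" by (simp add: power2_eq_square algebra_simps)
  have "sqrt (4 + 2 * real (P + m)) \<le> sqrt ((real m + 2) ^ 2)" using h by (rule real_sqrt_le_mono)
  also have "\<dots> = real m + 2" by simp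
  finally show "real P - real m \<le> real (P + m) + 4 - 2 * sqrt (4 + 2 * real (P + m))" by simp
  assume "real P - real m = real (P + m) + 4 - 2 * sqrt (4 + 2 * real (P + m))"
  then have "sqrt (4 + 2 * real (P + m)) = real m + 2" by simp
  then have "(sqrt (4 + 2 * real (P + m)))^2 = (real m + 2)^2" by simp
  then have "4 + 2 * real (P + m) = (real m + 2)^2" by simp
  then have "real (2 * P) = real (m ^ 2 + 2 * m)" by (simp add: power2_eq_square algebra_simps)
  then show "2 * P = m ^ 2 + 2 * m" by (rule of_nat_eq_iff[THEN iffD1])
qed

lemma to_corona:
  assumes sg: "simple_graph V E" and tf: "triangle_free V E" and V: "V = P \<union> M"
    and disj: "P \<inter> M = {}"
    and r1: "\<forall>v\<in>P. card (nbhd M E v) = 1"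
    and r2: "\<forall>v\<in>M. card (nbhd P E v) = card (nbhd M E v) + c"
    and r3: "\<forall>v\<in>M. 2 * card (nbhd M E v) = card M" and ne: "M \<noteq> {}"
    and lf: "\<forall>v\<in>P. card (nbhd P E v) \<le> dd"
  shows "corona_family c dd V E"
proof -
  have finV: "finite V" and sym: "\<forall>x y. E x y \<longrightarrow> E y x" using sg by (auto simp: simple_graph_def)
  have finM: "finite M" using finV V by auto
  have tfM: "\<forall>x\<in>M. \<forall>y\<in>M. \<forall>z\<in>M. \<not> (E x y \<and> E y z \<and> E x z)"
    using tf V by (auto simp: triangle_free_def)
  obtain A B where MAB: "M = A \<union> B" and AB: "A \<inter> B = {}" and cA: "2 * card A = card M"
    and cB: "2 * card B = card M"
    and bp: "\<forall>x\<in>M. \<forall>y\<in>M. E x y \<longleftrightarrow> (x \<in> A \<and> y \<in> B) \<or> (x \<in> B \<and> y \<in> A)"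
    using bip[OF finM sym tfM ne r3] by blast
  define p where "p = card A"
  define h where "h l = the_elem (nbhd M E l)" for l
  have hs: "nbhd M E l = {h l}" if "l \<in> P" for l
  proof -
    from r1 that have "card (nbhd M E l) = 1" by blast
    then obtain x where "nbhd M E l = {x}" by (rule card_1_singletonE)
    then show ?thesis by (simp add: h_def)
  qed
  have hE: "E l x \<longleftrightarrow> h l = x" if "l \<in> P" "x \<in> M" for l x
  proof -
    have "E l x \<longleftrightarrow> x \<in> nbhd M E l" using that by (simp add: nbhd_def)
    also have "\<dots> \<longleftrightarrow> h l = x" using hs[OF that(1)] by auto
    finally show ?thesis .
  qed
  have hM: "h l \<in> M" if "l \<in> P" for l
    using hs[OF that] by (auto simp: nbhd_def)
  have "card M > 0" using finM ne by (simp add: card_gt_0_iff)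
  then have p1: "p \<ge> 1" using cA by (simp add: p_def)
  have fib: "card {l \<in> P. h l = x} = p + c" if "x \<in> A \<union> B" for x
  proof -
    have xM: "x \<in> M" using that MAB by simp
    have "{l \<in> P. h l = x} = nbhd P E x" using hE xM sym by (auto simp: nbhd_def)
    moreover have "card (nbhd M E x) = p" using r3 xM cA p_def by (metis mult_left_cancel zero_neq_numeral)
    ultimately show ?thesis using r2 xM by simp
  qed
  show ?thesis
    unfolding corona_family_def
  proof (rule exI[of _ p], rule exI[of _ A], rule exI[of _ B], rule exI[of _ P], rule exI[of _ h], intro conjI)
    show "p \<ge> 1" by (rule p1)
    show "V = A \<union> B \<union> P" using V MAB by auto
    show "A \<inter> B = {}" by (rule AB)
    show "A \<inter> P = {}" "B \<inter> P = {}" using disj MAB by auto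
    show "card A = p" by (simp add: p_def)
    show "card B = p" using cA cB p_def by simp
    show "\<forall>l\<in>P. h l \<in> A \<union> B" using hM MAB by auto
    show "\<forall>x\<in>A \<union> B. card {l \<in> P. h l = x} = p + c" using fib by blast
    show "\<forall>u\<in>A \<union> B. \<forall>v\<in>A \<union> B. E u v \<longleftrightarrow> (u \<in> A \<and> v \<in> B) \<or> (u \<in> B \<and> v \<in> A)"
      using bp MAB by simp
    show "\<forall>l\<in>P. \<forall>x\<in>A \<union> B. E l x \<longleftrightarrow> h l = x" using hE MAB by simp
    show "triangle_free V E" by (rule tf)
    show "\<forall>l\<in>P. card (nbhd P E l) \<le> dd" by (rule lf)
  qed
qed

lemma corona_fun:
  assumes sg: "simple_graph V E" and cf: "corona_family q d V E"
  shows "\<exists>(g::'a \<Rightarrow> int) p (L::'a set). card V = 2 * p + card L \<and> card L = 2 * p * (p + q)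
     \<and> sum g V = int (card L) - 2 * int p \<and> (\<forall>v\<in>V. g v \<in> {-1,1})
     \<and> (\<forall>v\<in>V. sum g (nbhd V E v) \<le> (if g v = 1 then int d - 1 else int q))"
proof -
  have finV: "finite V" and sym: "\<forall>x y. E x y \<longrightarrow> E y x" using sg by (auto simp: simple_graph_def)
  obtain p A B L h where p1: "p \<ge> (1::nat)" and V: "V = A \<union> B \<union> L" and AB: "A \<inter> B = {}"
    and AL: "A \<inter> L = {}" and BL: "B \<inter> L = {}" and cA: "card A = p" and cB: "card B = p"
    and hAB: "\<forall>l\<in>L. h l \<in> A \<union> B"
    and fib: "\<forall>x\<in>A \<union> B. card {l \<in> L. h l = x} = p + q"
    and bp: "\<forall>u\<in>A \<union> B. \<forall>v\<in>A \<union> B. E u v \<longleftrightarrow> (u \<in> A \<and> v \<in> B) \<or> (u \<in> B \<and> v \<in> A)"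
    and hE: "\<forall>l\<in>L. \<forall>x\<in>A \<union> B. E l x \<longleftrightarrow> h l = x"
    and lf: "\<forall>l\<in>L. card (nbhd L E l) \<le> d"
    using cf unfolding corona_family_def apply (elim exE conjE) apply (rule that) by assumption+
  define g :: "'a \<Rightarrow> int" where "g v = (if v \<in> L then 1 else -1)" for v
  have finA: "finite A" and finB: "finite B" and finL: "finite L" using finV V by auto
  have cAB: "card (A \<union> B) = 2 * p" using card_Un_disjoint[OF finA finB AB] cA cB by simp
  have cV: "card V = 2 * p + card L"
    using V card_Un_disjoint[OF finite_UnI[OF finA finB] finL] AL BL cAB by (simp add: Int_Un_distrib2)
  have Lu: "L = (\<Union>x\<in>A \<union> B. {l \<in> L. h l = x})" using hAB by auto
  have "card (\<Union>x\<in>A \<union> B. {l \<in> L. h l = x}) = (\<Sum>x\<in>A \<union> B. card {l \<in> L. h l = x})"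
    by (rule card_UN_disjoint) (use finA finB finL in auto)
  also have "\<dots> = (\<Sum>x\<in>A \<union> B. p + q)" using fib by simp
  finally have cL: "card L = 2 * p * (p + q)" using Lu cAB by simp
  have pm: "\<forall>v\<in>V. g v \<in> {-1,1}" by (simp add: g_def)
  have "sum g V = int (card {v\<in>V. g v = 1}) - int (card {v\<in>V. g v = -1})"
    by (rule sum_pm[OF finV pm])
  moreover have "{v\<in>V. g v = 1} = L" using V by (auto simp: g_def)
  moreover have "{v\<in>V. g v = -1} = A \<union> B" using V AL BL by (auto simp: g_def)
  ultimately have sg_eq: "sum g V = int (card L) - 2 * int p" using cAB by simp
  have nb: "sum g (nbhd V E v) \<le> (if g v = 1 then int d - 1 else int q)" if v: "v \<in> V" for v
  proof -
    have finN: "finite (nbhd V E v)" using finV by (simp add: nbhd_def)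
    have pmN: "\<forall>u\<in>nbhd V E v. g u \<in> {-1,1}" by (simp add: g_def)
    have S: "sum g (nbhd V E v) = int (card {u\<in>nbhd V E v. g u = 1}) - int (card {u\<in>nbhd V E v. g u = -1})"
      by (rule sum_pm[OF finN pmN])
    have fin1: "finite {u\<in>nbhd V E v. g u = 1}" and fin2: "finite {u\<in>nbhd V E v. g u = -1}"
      using finN by auto
    consider (L) "v \<in> L" | (A) "v \<in> A" | (B) "v \<in> B" using v V by blast
    then show ?thesis
    proof cases
      case L
      have "{u\<in>nbhd V E v. g u = 1} = nbhd L E v" using V by (auto simp: g_def nbhd_def)
      then have c1: "card {u\<in>nbhd V E v. g u = 1} \<le> d" using lf L by simp
      have "h v \<in> {u\<in>nbhd V E v. g u = -1}"
        using hAB hE L V AL BL by (auto simp: g_def nbhd_def)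
      then have "card {u\<in>nbhd V E v. g u = -1} \<ge> 1"
        using fin2 by (metis One_nat_def Suc_leI card_gt_0_iff empty_iff)
      then show ?thesis using S c1 L by (simp add: g_def)
    next
      case A
      have "{u\<in>nbhd V E v. g u = 1} \<subseteq> {l \<in> L. h l = v}"
        using hE sym A by (auto simp: g_def nbhd_def)
      then have c1: "card {u\<in>nbhd V E v. g u = 1} \<le> p + q"
        using fib A card_mono[OF finite_subset[OF _ finL]] by (metis (no_types, lifting) UnI1 mem_Collect_eq subsetI)
      have "B \<subseteq> {u\<in>nbhd V E v. g u = -1}"
        using bp A V BL AB by (auto simp: g_def nbhd_def)
      then have "card {u\<in>nbhd V E v. g u = -1} \<ge> p" using card_mono[OF fin2] cB by fastforce
      moreover have "g v = -1" using A AL by (auto simp: g_def)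
      ultimately show ?thesis using S c1 by simp
    next
      case B
      have "{u\<in>nbhd V E v. g u = 1} \<subseteq> {l \<in> L. h l = v}"
        using hE sym B by (auto simp: g_def nbhd_def)
      then have c1: "card {u\<in>nbhd V E v. g u = 1} \<le> p + q"
        using fib B card_mono[OF finite_subset[OF _ finL]] by (metis (no_types, lifting) UnI2 mem_Collect_eq subsetI)
      have "A \<subseteq> {u\<in>nbhd V E v. g u = -1}"
        using bp B V AL AB by (auto simp: g_def nbhd_def)
      then have "card {u\<in>nbhd V E v. g u = -1} \<ge> p" using card_mono[OF fin2] cA by fastforce
      moreover have "g v = -1" using B BL by (auto simp: g_def)
      ultimately show ?thesis using S c1 by simp
    qed
  qed
  have "card V = 2 * p + card L \<and> card L = 2 * p * (p + q)
     \<and> sum g V = int (card L) - 2 * int p \<and> (\<forall>v\<in>V. g v \<in> {-1,1})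
     \<and> (\<forall>v\<in>V. sum g (nbhd V E v) \<le> (if g v = 1 then int d - 1 else int q))"
    using cV cL sg_eq pm nb by blast
  then show ?thesis by blast
qed

lemma sbf_main:
  assumes sg: "simple_graph V E" and tf: "triangle_free V E" and ne: "V \<noteq> {}"
    and md: "min_deg_ge V E 1" and f: "is_SBF V E f"
  shows "real_of_int (sum f V) \<le> real (card V) + 6 - 2 * sqrt (9 + 2 * real (card V))
    \<and> (real_of_int (sum f V) = real (card V) + 6 - 2 * sqrt (9 + 2 * real (card V)) \<longrightarrow> in_Lambda V E)"
proof -
  have finV: "finite V" using sg by (simp add: simple_graph_def)
  have pm: "\<forall>v\<in>V. f v \<in> {-1,1}" and cb: "\<forall>v\<in>V. sum f (cnbhd V E v) \<le> 1"
    using f by (auto simp: is_SBF_def)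
  define P where "P = {v\<in>V. f v = 1}"
  define M where "M = {v\<in>V. f v = -1}"
  note fs = f_split[OF sg pm, folded P_def M_def]
  have hP: "\<forall>v\<in>P. 1 \<le> card (nbhd M E v) \<and> card (nbhd P E v) \<le> card (nbhd M E v)"
  proof
    fix v assume vP: "v \<in> P"
    then have v: "v \<in> V" "f v = 1" by (auto simp: P_def)
    have "sum f (cnbhd V E v) \<le> 1" using cb v by blast
    then have a: "card (nbhd P E v) \<le> card (nbhd M E v)" using fs(4,5)[OF v(1)] v(2) by simp
    have "card (nbhd V E v) \<ge> 1" using md v by (simp add: min_deg_ge_def)
    then show "1 \<le> card (nbhd M E v) \<and> card (nbhd P E v) \<le> card (nbhd M E v)"
      using a fs(6)[OF v(1)] by linarith
  qed
  have hM: "\<forall>v\<in>M. card (nbhd P E v) \<le> card (nbhd M E v) + 2"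
  proof
    fix v assume vM: "v \<in> M"
    then have v: "v \<in> V" "f v = -1" by (auto simp: M_def)
    have "sum f (cnbhd V E v) \<le> 1" using cb v by blast
    then show "card (nbhd P E v) \<le> card (nbhd M E v) + 2" using fs(4,5)[OF v(1)] v(2) by simp
  qed
  have c1: "2 * card P \<le> card M ^ 2 + 2 * 2 * card M"
    by (rule core(1)[OF sg tf fs(1) fs(2)]) (use hP hM in auto)
  have finP: "finite P" and finM: "finite M" using finV by (auto simp: P_def M_def)
  have n: "card V = card P + card M" using fs(1,2) card_Un_disjoint[OF finP finM] by simp
  have sv: "real_of_int (sum f V) = real (card P) - real (card M)" using fs(3) by simp
  have c1': "2 * card P \<le> card M ^ 2 + 4 * card M" using c1 by simp
  note a = arith1[OF c1']
  show ?thesis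
  proof (intro conjI impI)
    show "real_of_int (sum f V) \<le> real (card V) + 6 - 2 * sqrt (9 + 2 * real (card V))"
      using a(1) sv n by simp
    assume "real_of_int (sum f V) = real (card V) + 6 - 2 * sqrt (9 + 2 * real (card V))"
    then have "2 * card P = card M ^ 2 + 4 * card M" using a(2) sv n by simp
    then have "2 * card P = card M ^ 2 + 2 * 2 * card M" by simp
    note r = core(2)[OF sg tf fs(1) fs(2) _ _ this ne]
    have rr: "(\<forall>v\<in>P. card (nbhd M E v) = 1) \<and> (\<forall>v\<in>M. card (nbhd P E v) = card (nbhd M E v) + 2)
       \<and> (\<forall>v\<in>M. 2 * card (nbhd M E v) = card M) \<and> M \<noteq> {}"
      by (rule r) (use hP hM in auto)
    have lf: "\<forall>v\<in>P. card (nbhd P E v) \<le> 1" using rr hP by fastforce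
    have "corona_family 2 1 V E"
      by (rule to_corona[OF sg tf fs(1) fs(2)]) (use rr lf in auto)
    then show "in_Lambda V E" by (simp add: in_Lambda_def)
  qed
qed

lemma bf_main:
  assumes sg: "simple_graph V E" and tf: "triangle_free V E" and ne: "V \<noteq> {}"
    and md: "min_deg_ge V E 2" and f: "is_BF V E f"
  shows "real_of_int (sum f V) \<le> real (card V) + 4 - 2 * sqrt (4 + 2 * real (card V))
    \<and> (real_of_int (sum f V) = real (card V) + 4 - 2 * sqrt (4 + 2 * real (card V)) \<longrightarrow> in_Omega V E)"
proof -
  have finV: "finite V" using sg by (simp add: simple_graph_def)
  have pm: "\<forall>v\<in>V. f v \<in> {-1,1}" and cb: "\<forall>v\<in>V. sum f (nbhd V E v) \<le> 1"
    using f by (auto simp: is_BF_def)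
  define P where "P = {v\<in>V. f v = 1}"
  define M where "M = {v\<in>V. f v = -1}"
  note fs = f_split[OF sg pm, folded P_def M_def]
  have hP: "\<forall>v\<in>P. 1 \<le> card (nbhd M E v) \<and> card (nbhd P E v) \<le> card (nbhd M E v) + 1"
  proof
    fix v assume vP: "v \<in> P"
    then have v: "v \<in> V" "f v = 1" by (auto simp: P_def)
    have "sum f (nbhd V E v) \<le> 1" using cb v by blast
    then have a: "card (nbhd P E v) \<le> card (nbhd M E v) + 1" using fs(4)[OF v(1)] by simp
    have "card (nbhd V E v) \<ge> 2" using md v by (simp add: min_deg_ge_def)
    then show "1 \<le> card (nbhd M E v) \<and> card (nbhd P E v) \<le> card (nbhd M E v) + 1"
      using a fs(6)[OF v(1)] by linarith
  qed
  have hM: "\<forall>v\<in>M. card (nbhd P E v) \<le> card (nbhd M E v) + 1"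
  proof
    fix v assume vM: "v \<in> M"
    then have v: "v \<in> V" "f v = -1" by (auto simp: M_def)
    have "sum f (nbhd V E v) \<le> 1" using cb v by blast
    then show "card (nbhd P E v) \<le> card (nbhd M E v) + 1" using fs(4)[OF v(1)] by simp
  qed
  have c1: "2 * card P \<le> card M ^ 2 + 2 * 1 * card M"
    by (rule core(1)[OF sg tf fs(1) fs(2)]) (use hP hM in auto)
  have finP: "finite P" and finM: "finite M" using finV by (auto simp: P_def M_def)
  have n: "card V = card P + card M" using fs(1,2) card_Un_disjoint[OF finP finM] by simp
  have sv: "real_of_int (sum f V) = real (card P) - real (card M)" using fs(3) by simp
  have c1': "2 * card P \<le> card M ^ 2 + 2 * card M" using c1 by simp
  note a = arith2[OF c1']
  show ?thesis
  proof (intro conjI impI)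
    show "real_of_int (sum f V) \<le> real (card V) + 4 - 2 * sqrt (4 + 2 * real (card V))"
      using a(1) sv n by simp
    assume "real_of_int (sum f V) = real (card V) + 4 - 2 * sqrt (4 + 2 * real (card V))"
    then have "2 * card P = card M ^ 2 + 2 * card M" using a(2) sv n by simp
    then have "2 * card P = card M ^ 2 + 2 * 1 * card M" by simp
    note r = core(2)[OF sg tf fs(1) fs(2) _ _ this ne]
    have rr: "(\<forall>v\<in>P. card (nbhd M E v) = 1) \<and> (\<forall>v\<in>M. card (nbhd P E v) = card (nbhd M E v) + 1)
       \<and> (\<forall>v\<in>M. 2 * card (nbhd M E v) = card M) \<and> M \<noteq> {}"
      by (rule r) (use hP hM in auto)
    have lf: "\<forall>v\<in>P. card (nbhd P E v) \<le> 2" using rr hP by fastforce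
    have "corona_family 1 2 V E"
      by (rule to_corona[OF sg tf fs(1) fs(2)]) (use rr lf in auto)
    then show "in_Omega V E" by (simp add: in_Omega_def)
  qed
qed

lemma max_props:
  fixes Q :: "('a \<Rightarrow> int) \<Rightarrow> bool"
  assumes finV: "finite V" and g0: "Q g0" and pm: "\<And>f. Q f \<Longrightarrow> \<forall>v\<in>V. f v \<in> {-1,1}"
  shows "Max {sum f V | f. Q f} \<in> {sum f V | f. Q f}"
    and "\<forall>f. Q f \<longrightarrow> sum f V \<le> Max {sum f V | f. Q f}"
proof -
  have sub: "{sum f V | f. Q f} \<subseteq> {- int (card V) .. int (card V)}"
  proof
    fix x assume "x \<in> {sum f V | f. Q f}"
    then obtain f where x: "x = sum f V" and Qf: "Q f" by blast
    have "\<bar>sum f V\<bar> \<le> (\<Sum>v\<in>V. \<bar>f v\<bar>)" by (rule sum_abs)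
    also have "\<dots> = (\<Sum>v\<in>V. 1)" using pm[OF Qf] by (intro sum.cong) auto
    finally show "x \<in> {- int (card V) .. int (card V)}" using x by auto
  qed
  have fin: "finite {sum f V | f. Q f}" by (rule finite_subset[OF sub]) simp
  have ne: "{sum f V | f. Q f} \<noteq> {}" using g0 by blast
  show "Max {sum f V | f. Q f} \<in> {sum f V | f. Q f}" by (rule Max_in[OF fin ne])
  show "\<forall>f. Q f \<longrightarrow> sum f V \<le> Max {sum f V | f. Q f}" using fin by (auto intro: Max_ge)
qed

theorem theorem2p2:
  fixes V :: "'a set" and E :: "'a \<Rightarrow> 'a \<Rightarrow> bool" and n :: nat
  assumes "simple_graph V E" and "V \<noteq> {}" and "triangle_free V E" and "n = card V"
  shows "(min_deg_ge V E 1 \<longrightarrow>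
            real_of_int (signed_bad_number V E) \<le> real n + 6 - 2 * sqrt (9 + 2 * real n) \<and>
            (real_of_int (signed_bad_number V E) = real n + 6 - 2 * sqrt (9 + 2 * real n)
               \<longleftrightarrow> in_Lambda V E))
       \<and> (min_deg_ge V E 2 \<longrightarrow>
            real_of_int (negative_decision_number V E) \<le> real n + 4 - 2 * sqrt (4 + 2 * real n) \<and>
            (real_of_int (negative_decision_number V E) = real n + 4 - 2 * sqrt (4 + 2 * real n)
               \<longleftrightarrow> in_Omega V E))"
proof -
  note sg = assms(1) and ne = assms(2) and tf = assms(3) and nV = assms(4)
  have finV: "finite V" and irr: "\<forall>x. \<not> E x x" using sg by (auto simp: simple_graph_def)
  have finN: "finite (nbhd V E v)" for v using finV by (simp add: nbhd_def)
  have sbf0: "is_SBF V E (\<lambda>_. -1)"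
    unfolding is_SBF_def by simp
  have bf0: "is_BF V E (\<lambda>_. -1)"
    unfolding is_BF_def by simp
  have pmS: "\<And>f. is_SBF V E f \<Longrightarrow> \<forall>v\<in>V. f v \<in> {-1,1}" by (simp add: is_SBF_def)
  have pmB: "\<And>f. is_BF V E f \<Longrightarrow> \<forall>v\<in>V. f v \<in> {-1,1}" by (simp add: is_BF_def)
  note M1 = max_props[where Q="is_SBF V E", OF finV sbf0 pmS]
  note M2 = max_props[where Q="is_BF V E", OF finV bf0 pmB]
  have part1: "min_deg_ge V E 1 \<longrightarrow>
            real_of_int (signed_bad_number V E) \<le> real n + 6 - 2 * sqrt (9 + 2 * real n) \<and>
            (real_of_int (signed_bad_number V E) = real n + 6 - 2 * sqrt (9 + 2 * real n)
               \<longleftrightarrow> in_Lambda V E)"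
  proof
    assume md: "min_deg_ge V E 1"
    have "signed_bad_number V E \<in> {sum f V | f. is_SBF V E f}"
      unfolding signed_bad_number_def by (rule M1(1))
    then obtain f where f: "is_SBF V E f" and fe: "signed_bad_number V E = sum f V" by blast
    note sm = sbf_main[OF sg tf ne md f]
    have le: "real_of_int (signed_bad_number V E) \<le> real n + 6 - 2 * sqrt (9 + 2 * real n)"
      using sm fe nV by simp
    show "real_of_int (signed_bad_number V E) \<le> real n + 6 - 2 * sqrt (9 + 2 * real n) \<and>
            (real_of_int (signed_bad_number V E) = real n + 6 - 2 * sqrt (9 + 2 * real n)
               \<longleftrightarrow> in_Lambda V E)"
    proof (intro conjI iffI le)
      assume "real_of_int (signed_bad_number V E) = real n + 6 - 2 * sqrt (9 + 2 * real n)"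
      then show "in_Lambda V E" using sm fe nV by simp
    next
      assume "in_Lambda V E"
      then have "corona_family 2 1 V E" by (simp add: in_Lambda_def)
      from corona_fun[OF sg this] obtain g :: "'a \<Rightarrow> int" and p :: nat and L :: "'a set" where
        cV: "card V = 2 * p + card L" and cL: "card L = 2 * p * (p + 2)"
        and sgV: "sum g V = int (card L) - 2 * int p" and pmg: "\<forall>v\<in>V. g v \<in> {-1,1}"
        and nb: "\<forall>v\<in>V. sum g (nbhd V E v) \<le> (if g v = 1 then int 1 - 1 else int 2)"
        by blast
      have "is_SBF V E g"
        unfolding is_SBF_def
      proof (intro conjI ballI)
        fix v assume v: "v \<in> V"
        show "g v \<in> {-1,1}" using pmg v by blast
        have "sum g (cnbhd V E v) = g v + sum g (nbhd V E v)"
          using f_split(5)[OF sg pmg v] .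
        moreover have "g v = -1 \<or> g v = 1" using pmg v by blast
        moreover have "sum g (nbhd V E v) \<le> (if g v = 1 then int 1 - 1 else int 2)" using nb v by blast
        ultimately show "sum g (cnbhd V E v) \<le> 1" by (cases "g v = 1") auto
      qed
      then have ge: "sum g V \<le> signed_bad_number V E"
        using M1(2) unfolding signed_bad_number_def by blast
      have sq: "9 + 2 * real n = (2 * real p + 3)^2"
        using nV cV cL by (simp add: power2_eq_square algebra_simps)
      have "sqrt (9 + 2 * real n) = 2 * real p + 3" unfolding sq by simp
      then have "real_of_int (sum g V) = real n + 6 - 2 * sqrt (9 + 2 * real n)"
        using sgV nV cV cL by (simp add: algebra_simps)
      then show "real_of_int (signed_bad_number V E) = real n + 6 - 2 * sqrt (9 + 2 * real n)"
        using ge le by (metis antisym of_int_le_iff)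
    qed
  qed
  have part2: "min_deg_ge V E 2 \<longrightarrow>
            real_of_int (negative_decision_number V E) \<le> real n + 4 - 2 * sqrt (4 + 2 * real n) \<and>
            (real_of_int (negative_decision_number V E) = real n + 4 - 2 * sqrt (4 + 2 * real n)
               \<longleftrightarrow> in_Omega V E)"
  proof
    assume md: "min_deg_ge V E 2"
    have "negative_decision_number V E \<in> {sum f V | f. is_BF V E f}"
      unfolding negative_decision_number_def by (rule M2(1))
    then obtain f where f: "is_BF V E f" and fe: "negative_decision_number V E = sum f V" by blast
    note sm = bf_main[OF sg tf ne md f]
    have le: "real_of_int (negative_decision_number V E) \<le> real n + 4 - 2 * sqrt (4 + 2 * real n)"
      using sm fe nV by simp
    show "real_of_int (negative_decision_number V E) \<le> real n + 4 - 2 * sqrt (4 + 2 * real n) \<and>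
            (real_of_int (negative_decision_number V E) = real n + 4 - 2 * sqrt (4 + 2 * real n)
               \<longleftrightarrow> in_Omega V E)"
    proof (intro conjI iffI le)
      assume "real_of_int (negative_decision_number V E) = real n + 4 - 2 * sqrt (4 + 2 * real n)"
      then show "in_Omega V E" using sm fe nV by simp
    next
      assume "in_Omega V E"
      then have "corona_family 1 2 V E" by (simp add: in_Omega_def)
      from corona_fun[OF sg this] obtain g :: "'a \<Rightarrow> int" and p :: nat and L :: "'a set" where
        cV: "card V = 2 * p + card L" and cL: "card L = 2 * p * (p + 1)"
        and sgV: "sum g V = int (card L) - 2 * int p" and pmg: "\<forall>v\<in>V. g v \<in> {-1,1}"
        and nb: "\<forall>v\<in>V. sum g (nbhd V E v) \<le> (if g v = 1 then int 2 - 1 else int 1)"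
        by blast
      have "is_BF V E g"
        unfolding is_BF_def
      proof (intro conjI ballI)
        fix v assume v: "v \<in> V"
        show "g v \<in> {-1,1}" using pmg v by blast
        show "sum g (nbhd V E v) \<le> 1" using nb v by (auto split: if_splits)
      qed
      then have ge: "sum g V \<le> negative_decision_number V E"
        using M2(2) unfolding negative_decision_number_def by blast
      have sq: "4 + 2 * real n = (2 * real p + 2)^2"
        using nV cV cL by (simp add: power2_eq_square algebra_simps)
      have "sqrt (4 + 2 * real n) = 2 * real p + 2" unfolding sq by simp
      then have "real_of_int (sum g V) = real n + 4 - 2 * sqrt (4 + 2 * real n)"
        using sgV nV cV cL by (simp add: algebra_simps)
      then show "real_of_int (negative_decision_number V E) = real n + 4 - 2 * sqrt (4 + 2 * real n)"
        using ge le by (metis antisym of_int_le_iff)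
    qed
  qed
  show ?thesis using part1 part2 by blast
qed

end
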